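(* Let $X,Y$ be sets and let $G\subseteq X\times Y$ be a connected bipartite graph. Let $\mathcal F(G)$ be the set of finite, connected, twin-free induced subgraphs of $G$. If $\mathcal F(G)$ contains only finitely many pairwise non-isomorphic bipartite graphs, then $\operatorname{tf}(G)$ is finite.
   Context: A subset $G\subseteq X\times Y$ is viewed as a bipartite graph with vertex set the disjoint union of $X$ and $Y$ and edge set $G$. For $X_0\subseteq X$, $Y_0\subseteq Y$, the induced subgraph is $G[X_0,Y_0]=G\cap(X_0\times Y_0)$ (with vertex set $X_0\sqcup Y_0$). Two vertices are twins if they have the same set of neighbours; a graph is twin-free if no two distinct vertices are twins. $\operatorname{tf}(G)$ denotes a maximal twin-free induced subgraph of $G$, obtained by choosing one vertex from each twin-equivalence class; it is unique up to isomorphism. Isomorphisms of bipartite graphs are bijections of vertex sets preserving edges and mapping the two sides onto the two sides (possibly swapping them). *)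

theory Defs
  imports Main
begin

text \<open>A bipartite graph is given by two sides X, Y and an edge set E (only the
part of E inside X \<times> Y counts). Its vertex set is the disjoint union X <+> Y.\<close>

definition nbr :: "'a set \<Rightarrow> 'b set \<Rightarrow> ('a \<times> 'b) set \<Rightarrow> 'a + 'b \<Rightarrow> ('a + 'b) set" where
  "nbr X Y E v = (case v of
      Inl x \<Rightarrow> Inr ` {y \<in> Y. x \<in> X \<and> (x, y) \<in> E}
    | Inr y \<Rightarrow> Inl ` {x \<in> X. y \<in> Y \<and> (x, y) \<in> E})"

definition twin_free :: "'a set \<Rightarrow> 'b set \<Rightarrow> ('a \<times> 'b) set \<Rightarrow> bool" where
  "twin_free X Y E \<longleftrightarrow> inj_on (nbr X Y E) (X <+> Y)"

definition adj :: "'a set \<Rightarrow> 'b set \<Rightarrow> ('a \<times> 'b) set \<Rightarrow> ('a + 'b) rel" where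
  "adj X Y E = {(Inl x, Inr y) | x y. x \<in> X \<and> y \<in> Y \<and> (x, y) \<in> E}"

definition bip_connected :: "'a set \<Rightarrow> 'b set \<Rightarrow> ('a \<times> 'b) set \<Rightarrow> bool" where
  "bip_connected X Y E \<longleftrightarrow>
     (\<forall>u \<in> X <+> Y. \<forall>v \<in> X <+> Y. (u, v) \<in> (adj X Y E \<union> (adj X Y E)\<inverse>)\<^sup>*)"

definition bip_iso :: "'a set \<Rightarrow> 'b set \<Rightarrow> ('a \<times> 'b) set \<Rightarrow>
                       'c set \<Rightarrow> 'd set \<Rightarrow> ('c \<times> 'd) set \<Rightarrow> bool" where
  "bip_iso X1 Y1 E1 X2 Y2 E2 \<longleftrightarrow>
     (\<exists>f g. bij_betw f X1 X2 \<and> bij_betw g Y1 Y2 \<and>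
        (\<forall>x \<in> X1. \<forall>y \<in> Y1. (x, y) \<in> E1 \<longleftrightarrow> (f x, g y) \<in> E2))
   \<or> (\<exists>f g. bij_betw f X1 Y2 \<and> bij_betw g Y1 X2 \<and>
        (\<forall>x \<in> X1. \<forall>y \<in> Y1. (x, y) \<in> E1 \<longleftrightarrow> (g y, f x) \<in> E2))"

definition induced :: "('a \<times> 'b) set \<Rightarrow> 'a set \<Rightarrow> 'b set \<Rightarrow> ('a \<times> 'b) set" where
  "induced G X0 Y0 = G \<inter> (X0 \<times> Y0)"

definition FG :: "'a set \<Rightarrow> 'b set \<Rightarrow> ('a \<times> 'b) set \<Rightarrow> ('a set \<times> 'b set) set" where
  "FG X Y G = {(X0, Y0). X0 \<subseteq> X \<and> Y0 \<subseteq> Y \<and> finite X0 \<and> finite Y0 \<and>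
       bip_connected X0 Y0 (induced G X0 Y0) \<and> twin_free X0 Y0 (induced G X0 Y0)}"

text \<open>A family of induced subgraphs contains only finitely many pairwise
non-isomorphic graphs: finitely many of its members represent all isomorphism types.\<close>
definition finitely_many_iso_types :: "('a \<times> 'b) set \<Rightarrow> ('a set \<times> 'b set) set \<Rightarrow> bool" where
  "finitely_many_iso_types G F \<longleftrightarrow>
     (\<exists>S. finite S \<and> S \<subseteq> F \<and>
        (\<forall>(X1, Y1) \<in> F. \<exists>(X2, Y2) \<in> S.
            bip_iso X1 Y1 (induced G X1 Y1) X2 Y2 (induced G X2 Y2)))"

text \<open>(X0,Y0) are the sides of a tf(G): one vertex chosen from each twin class of G.\<close>
definition is_tf :: "'a set \<Rightarrow> 'b set \<Rightarrow> ('a \<times> 'b) set \<Rightarrow> 'a set \<Rightarrow> 'b set \<Rightarrow> bool" where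
  "is_tf X Y G X0 Y0 \<longleftrightarrow> X0 \<subseteq> X \<and> Y0 \<subseteq> Y \<and>
     (\<forall>v \<in> X <+> Y. \<exists>!w. w \<in> X0 <+> Y0 \<and> nbr X Y G w = nbr X Y G v)"

end

theory Submission
  imports Defs
begin

definition RR :: "'a set \<Rightarrow> 'b set \<Rightarrow> ('a \<times> 'b) set \<Rightarrow> ('a + 'b) set \<Rightarrow> ('a + 'b) rel" where
  "RR X Y G W = {(u,v). u \<in> W \<and> v \<in> W \<and> v \<in> nbr X Y G u}"

lemma nbr_sub: "nbr X Y G v \<subseteq> X <+> Y"
  unfolding nbr_def by (auto split: sum.splits)

lemma nbr_sym:
  assumes "u \<in> X <+> Y" "v \<in> X <+> Y"
  shows "v \<in> nbr X Y G u \<longleftrightarrow> u \<in> nbr X Y G v"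
  using assms unfolding nbr_def by (auto split: sum.splits)

lemma nbr_induced:
  assumes "X1 \<subseteq> X" "Y1 \<subseteq> Y" "v \<in> X1 <+> Y1"
  shows "nbr X1 Y1 (induced G X1 Y1) v = nbr X Y G v \<inter> (X1 <+> Y1)"
  using assms unfolding nbr_def induced_def by (auto split: sum.splits)

lemma adj_eq:
  assumes "X1 \<subseteq> X" "Y1 \<subseteq> Y"
  shows "adj X1 Y1 (induced G X1 Y1) \<union> (adj X1 Y1 (induced G X1 Y1))\<inverse> = RR X Y G (X1 <+> Y1)"
  using assms unfolding adj_def RR_def nbr_def induced_def
  by (auto split: sum.splits) blast+

lemma conn_iff:
  assumes "X1 \<subseteq> X" "Y1 \<subseteq> Y"
  shows "bip_connected X1 Y1 (induced G X1 Y1) \<longleftrightarrow>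
    (\<forall>u\<in>X1 <+> Y1. \<forall>v\<in>X1 <+> Y1. (u,v) \<in> (RR X Y G (X1 <+> Y1))\<^sup>*)"
  unfolding bip_connected_def adj_eq[OF assms] ..

lemma twin_iff:
  assumes "X1 \<subseteq> X" "Y1 \<subseteq> Y"
  shows "twin_free X1 Y1 (induced G X1 Y1) \<longleftrightarrow>
    inj_on (\<lambda>v. nbr X Y G v \<inter> (X1 <+> Y1)) (X1 <+> Y1)"
  unfolding twin_free_def using nbr_induced[OF assms]
  by (simp add: inj_on_def)

lemma plus_vimage: "Inl -` S <+> Inr -` S = S"
proof (rule set_eqI)
  fix x :: "'a + 'b" show "x \<in> Inl -` S <+> Inr -` S \<longleftrightarrow> x \<in> S"
    by (cases x) auto
qed

lemma iso_card:
  assumes "bip_iso X1 Y1 E1 X2 Y2 E2"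
  shows "card X1 + card Y1 = card X2 + card Y2"
  using assms unfolding bip_iso_def
proof (elim disjE exE conjE)
  fix f g assume "bij_betw f X1 X2" "bij_betw g Y1 Y2"
  then show ?thesis by (simp add: bij_betw_same_card)
next
  fix f g assume "bij_betw f X1 Y2" "bij_betw g Y1 X2"
  then show ?thesis by (simp add: bij_betw_same_card)
qed

lemma RR_sym:
  assumes "W \<subseteq> X <+> Y"
  shows "(RR X Y G W)\<inverse> = RR X Y G W"
  using assms nbr_sym unfolding RR_def by blast

lemma reduce:
  assumes U: "W \<subseteq> X <+> Y" and fin: "finite W"
    and conn: "\<forall>u\<in>W. \<forall>v\<in>W. (u,v) \<in> (RR X Y G W)\<^sup>*"
  shows "\<exists>X2 Y2. (X2,Y2) \<in> FG X Y G \<and>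
           card ((\<lambda>v. nbr X Y G v \<inter> W) ` W) \<le> card (X2 <+> Y2)"
proof -
  define N where "N = nbr X Y G"
  define NW where "NW = (\<lambda>v. N v \<inter> W)"
  define rr where "rr = (\<lambda>S. SOME w. w \<in> W \<and> NW w = S)"
  define r where "r = (\<lambda>v. rr (NW v))"
  have r1: "r v \<in> W \<and> NW (r v) = NW v" if "v \<in> W" for v
  proof -
    have "\<exists>w. w \<in> W \<and> NW w = NW v" using that by blast
    then show ?thesis unfolding r_def rr_def by (rule someI_ex)
  qed
  define R0 where "R0 = r ` W"
  have R0W: "R0 \<subseteq> W" using r1 R0_def by auto
  have rid: "r u = u" if uR: "u \<in> R0" for u
  proof -
    obtain v where v: "v \<in> W" "u = r v" using uR unfolding R0_def by blast
    then have "NW u = NW v" using r1 by auto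
    then show ?thesis using v unfolding r_def by simp
  qed
  have sym: "a \<in> N b \<longleftrightarrow> b \<in> N a" if "a \<in> W" "b \<in> W" for a b
    using nbr_sym[of a X Y b G] that U unfolding N_def by auto
  have injNW: "inj_on NW R0"
  proof (rule inj_onI)
    fix u v assume "u \<in> R0" "v \<in> R0" "NW u = NW v"
    then have "r u = r v" unfolding r_def by simp
    then show "u = v" using rid \<open>u \<in> R0\<close> \<open>v \<in> R0\<close> by simp
  qed
  have img: "NW ` R0 = NW ` W"
  proof
    show "NW ` R0 \<subseteq> NW ` W" using R0W by blast
    show "NW ` W \<subseteq> NW ` R0"
    proof
      fix S assume "S \<in> NW ` W"
      then obtain v where v: "v \<in> W" "S = NW v" by blast
      then have "S = NW (r v)" using r1 by simp
      moreover have "r v \<in> R0" using v unfolding R0_def by blast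
      ultimately show "S \<in> NW ` R0" by blast
    qed
  qed
  have cardR0: "card R0 = card (NW ` W)"
    using card_image[OF injNW] img by simp
  have tf: "inj_on (\<lambda>v. N v \<inter> R0) R0"
  proof (rule inj_onI)
    fix u v assume u: "u \<in> R0" and v: "v \<in> R0" and eq: "N u \<inter> R0 = N v \<inter> R0"
    have key: "NW a \<subseteq> NW b" if a: "a \<in> R0" and b: "b \<in> R0" and e: "N a \<inter> R0 = N b \<inter> R0" for a b
    proof
      fix w assume w: "w \<in> NW a"
      then have wW: "w \<in> W" and wa: "w \<in> N a" unfolding NW_def by auto
      have aW: "a \<in> W" "b \<in> W" using a b R0W by auto
      have "a \<in> N w" using sym[OF aW(1) wW] wa by simp
      then have "a \<in> NW (r w)" using r1[OF wW] aW unfolding NW_def by auto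
      then have "r w \<in> N a" using sym[of "r w" a] r1[OF wW] aW unfolding NW_def by auto
      moreover have "r w \<in> R0" using wW R0_def by auto
      ultimately have "r w \<in> N b" using e by auto
      then have "b \<in> N (r w)" using sym[of "r w" b] r1[OF wW] aW by auto
      then have "b \<in> NW w" using r1[OF wW] aW unfolding NW_def by auto
      then show "w \<in> NW b" using sym[OF aW(2) wW] wW unfolding NW_def by auto
    qed
    have "NW u = NW v" using key[OF u v eq] key[OF v u eq[symmetric]] by auto
    then show "u = v" using injNW u v by (auto dest: inj_onD)
  qed
  have rstep: "(r a, r b) \<in> RR X Y G R0" if "(a,b) \<in> RR X Y G W" for a b
  proof -
    have ab: "a \<in> W" "b \<in> W" "b \<in> N a" using that unfolding RR_def N_def by auto
    have "b \<in> N (r a)" using r1[OF ab(1)] ab unfolding NW_def by auto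
    then have "r a \<in> N b" using sym[of b "r a"] ab r1 by auto
    then have "r a \<in> N (r b)" using r1[OF ab(2)] r1[OF ab(1)] unfolding NW_def by auto
    then have "r b \<in> N (r a)" using sym[of "r a" "r b"] ab r1 by auto
    then show ?thesis unfolding RR_def N_def R0_def using ab by auto
  qed
  have path: "(r a, r b) \<in> (RR X Y G R0)\<^sup>*" if "(a,b) \<in> (RR X Y G W)\<^sup>*" for a b
    using that
  proof (induction rule: rtrancl_induct)
    case base then show ?case by simp
  next
    case (step y z)
    have "(r y, r z) \<in> RR X Y G R0" using rstep step.hyps(2) .
    then show ?case using step.IH by (rule rtrancl.rtrancl_into_rtrancl[rotated])
  qed
  have conn0: "\<forall>u\<in>R0. \<forall>v\<in>R0. (u,v) \<in> (RR X Y G R0)\<^sup>*"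
  proof (intro ballI)
    fix u v assume "u \<in> R0" "v \<in> R0"
    then have "(r u, r v) \<in> (RR X Y G R0)\<^sup>*" using conn path R0W by blast
    then show "(u,v) \<in> (RR X Y G R0)\<^sup>*" using rid \<open>u \<in> R0\<close> \<open>v \<in> R0\<close> by simp
  qed
  define X2 where "X2 = Inl -` R0"
  define Y2 where "Y2 = Inr -` R0"
  have P: "X2 <+> Y2 = R0" unfolding X2_def Y2_def by (rule plus_vimage)
  have sub: "X2 \<subseteq> X" "Y2 \<subseteq> Y" using R0W U unfolding X2_def Y2_def by auto
  have finR0: "finite R0" using R0W fin finite_subset by auto
  have f2: "finite X2" "finite Y2" using finR0 P by (metis finite_Plus_iff)+
  have c2: "bip_connected X2 Y2 (induced G X2 Y2)" using conn_iff[OF sub, of G] conn0 P by simp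
  have t2: "twin_free X2 Y2 (induced G X2 Y2)" using twin_iff[OF sub, of G] tf P unfolding N_def by simp
  have "(X2, Y2) \<in> FG X Y G"
    unfolding FG_def using sub f2 c2 t2 by blast
  moreover have "card (NW ` W) \<le> card (X2 <+> Y2)" using P cardR0 by simp
  ultimately show ?thesis unfolding NW_def N_def by blast
qed

lemma path_fin:
  assumes "(u,v) \<in> Rel\<^sup>*"
  shows "\<exists>P. finite P \<and> u \<in> P \<and> v \<in> P \<and> (\<forall>w\<in>P. (u,w) \<in> (Rel \<inter> P \<times> P)\<^sup>*)"
  using assms
proof (induction rule: rtrancl_induct)
  case base
  show ?case by (rule exI[of _ "{u}"]) auto
next
  case (step y z)
  then obtain P where P: "finite P" "u \<in> P" "y \<in> P" "\<forall>w\<in>P. (u,w) \<in> (Rel \<inter> P \<times> P)\<^sup>*" by blast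
  define P' where "P' = insert z P"
  have mono: "(Rel \<inter> P \<times> P)\<^sup>* \<subseteq> (Rel \<inter> P' \<times> P')\<^sup>*"
    by (rule rtrancl_mono) (auto simp: P'_def)
  have "\<forall>w\<in>P'. (u,w) \<in> (Rel \<inter> P' \<times> P')\<^sup>*"
  proof
    fix w assume "w \<in> P'"
    then consider "w = z" | "w \<in> P" unfolding P'_def by blast
    then show "(u,w) \<in> (Rel \<inter> P' \<times> P')\<^sup>*"
    proof cases
      case 1
      have "(u,y) \<in> (Rel \<inter> P' \<times> P')\<^sup>*" using P mono by blast
      moreover have "(y,z) \<in> Rel \<inter> P' \<times> P'" using step.hyps(2) P unfolding P'_def by blast
      ultimately show ?thesis using 1 by (meson rtrancl.rtrancl_into_rtrancl)
    next
      case 2 then show ?thesis using P mono by blast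
    qed
  qed
  then show ?case using P unfolding P'_def by blast
qed

lemma RR_inter: "RR X Y G U \<inter> P \<times> P = RR X Y G (U \<inter> P)"
  unfolding RR_def by blast

theorem lemma2p5:
  fixes X :: "'a set" and Y :: "'b set" and G :: "('a \<times> 'b) set"
  assumes "G \<subseteq> X \<times> Y"
    and "bip_connected X Y G"
    and "finitely_many_iso_types G (FG X Y G)"
    and "is_tf X Y G X0 Y0"
  shows "finite X0 \<and> finite Y0"
proof (rule ccontr)
  assume inf0: "\<not> (finite X0 \<and> finite Y0)"
  define U where "U = X <+> Y"
  define N where "N = nbr X Y G"
  obtain S where S: "finite S" "S \<subseteq> FG X Y G"
    "\<forall>(X1, Y1) \<in> FG X Y G. \<exists>(X2, Y2) \<in> S. bip_iso X1 Y1 (induced G X1 Y1) X2 Y2 (induced G X2 Y2)"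
    using assms(3) unfolding finitely_many_iso_types_def by blast
  define M where "M = (\<Sum>(X2,Y2)\<in>S. card X2 + card Y2)"
  have bound: "card (X1 <+> Y1) \<le> M" if F: "(X1,Y1) \<in> FG X Y G" for X1 Y1
  proof -
    obtain X2 Y2 where "(X2,Y2) \<in> S" and iso: "bip_iso X1 Y1 (induced G X1 Y1) X2 Y2 (induced G X2 Y2)"
      using S(3) F by blast
    have f1: "finite X1" "finite Y1" using F unfolding FG_def by auto
    have "card (X1 <+> Y1) = card X2 + card Y2" using iso_card[OF iso] card_Plus[OF f1] by linarith
    also have "\<dots> \<le> M" unfolding M_def
      using member_le_sum[OF \<open>(X2,Y2) \<in> S\<close>, of "\<lambda>(X2,Y2). card X2 + card Y2"] S(1) by simp
    finally show ?thesis .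
  qed
  have tfsub: "X0 <+> Y0 \<subseteq> U" using assms(4) unfolding is_tf_def U_def by auto
  have distinct: "u = v" if "u \<in> X0 <+> Y0" "v \<in> X0 <+> Y0" "N u = N v" for u v
  proof -
    have "v \<in> U" using that tfsub by auto
    then have "\<exists>!w. w \<in> X0 <+> Y0 \<and> N w = N v" using assms(4) unfolding is_tf_def U_def N_def by blast
    then show ?thesis using that by blast
  qed
  have "infinite (X0 <+> Y0)" using inf0 by simp
  then obtain A where A: "A \<subseteq> X0 <+> Y0" "finite A" "card A = Suc M"
    using infinite_arbitrarily_large by blast
  have AU: "A \<subseteq> U" using A tfsub by auto
  have "A \<noteq> {}" using A by auto
  then obtain a0 where a0: "a0 \<in> A" by blast
  define Prs where "Prs = {(u,v). u \<in> A \<and> v \<in> A \<and> u \<noteq> v}"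
  have "Prs \<subseteq> A \<times> A" unfolding Prs_def by auto
  then have finPrs: "finite Prs" using A(2) finite_subset by blast
  have "\<forall>p\<in>Prs. \<exists>d. (d \<in> N (fst p) \<and> d \<notin> N (snd p)) \<or> (d \<in> N (snd p) \<and> d \<notin> N (fst p))"
  proof
    fix p assume "p \<in> Prs"
    then obtain u v where uv: "p = (u,v)" "u \<in> A" "v \<in> A" "u \<noteq> v" unfolding Prs_def by blast
    have "u \<in> X0 <+> Y0" "v \<in> X0 <+> Y0" using uv A(1) by (meson subsetD)+
    then have "N u \<noteq> N v" using distinct uv(4) by blast
    then have "N (fst p) \<noteq> N (snd p)" using uv by simp
    then show "\<exists>d. (d \<in> N (fst p) \<and> d \<notin> N (snd p)) \<or> (d \<in> N (snd p) \<and> d \<notin> N (fst p))" by blast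
  qed
  then obtain dd where dd: "\<forall>p\<in>Prs. (dd p \<in> N (fst p) \<and> dd p \<notin> N (snd p)) \<or> (dd p \<in> N (snd p) \<and> dd p \<notin> N (fst p))"
    by metis
  define D where "D = A \<union> dd ` Prs"
  have finD: "finite D" unfolding D_def using A(2) finPrs by simp
  have DU: "D \<subseteq> U"
  proof -
    have "dd p \<in> U" if "p \<in> Prs" for p using dd that nbr_sub[of X Y G] unfolding N_def U_def by blast
    then show ?thesis using AU unfolding D_def by auto
  qed
  have Gind: "induced G X Y = G" using assms(1) unfolding induced_def by auto
  have connU: "\<forall>u\<in>U. \<forall>v\<in>U. (u,v) \<in> (RR X Y G U)\<^sup>*"
    using conn_iff[of X X Y Y G] assms(2) Gind unfolding U_def by simp
  have a0U: "a0 \<in> U" using a0 AU by auto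
  have "\<forall>d\<in>D. \<exists>P. finite P \<and> a0 \<in> P \<and> d \<in> P \<and> (\<forall>w\<in>P. (a0,w) \<in> (RR X Y G U \<inter> P \<times> P)\<^sup>*)"
  proof
    fix d assume "d \<in> D"
    then have "d \<in> U" using DU by blast
    then have "(a0,d) \<in> (RR X Y G U)\<^sup>*" using connU a0U by blast
    then show "\<exists>P. finite P \<and> a0 \<in> P \<and> d \<in> P \<and> (\<forall>w\<in>P. (a0,w) \<in> (RR X Y G U \<inter> P \<times> P)\<^sup>*)"
      by (rule path_fin)
  qed
  then obtain PP where PP: "\<forall>d\<in>D. finite (PP d) \<and> a0 \<in> PP d \<and> d \<in> PP d \<and>
      (\<forall>w\<in>PP d. (a0,w) \<in> (RR X Y G U \<inter> PP d \<times> PP d)\<^sup>*)"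
    by metis
  define W where "W = U \<inter> (\<Union>d\<in>D. PP d)"
  have WU: "W \<subseteq> X <+> Y" unfolding W_def U_def by auto
  have finW: "finite W" unfolding W_def using finD PP by auto
  have DW: "D \<subseteq> W" unfolding W_def using DU PP by auto
  have reach: "(a0, w) \<in> (RR X Y G W)\<^sup>*" if w: "w \<in> W" for w
  proof -
    obtain d where d: "d \<in> D" "w \<in> PP d" using w unfolding W_def by auto
    have "(a0,w) \<in> (RR X Y G U \<inter> PP d \<times> PP d)\<^sup>*" using PP d by blast
    moreover have "RR X Y G U \<inter> PP d \<times> PP d \<subseteq> RR X Y G W"
      unfolding RR_def W_def using d by blast
    ultimately show ?thesis using rtrancl_mono by blast
  qed
  have symW: "(RR X Y G W)\<inverse> = RR X Y G W" using RR_sym[OF WU] .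
  have connW: "\<forall>u\<in>W. \<forall>v\<in>W. (u,v) \<in> (RR X Y G W)\<^sup>*"
  proof (intro ballI)
    fix u v assume "u \<in> W" "v \<in> W"
    have "(a0,u) \<in> (RR X Y G W)\<^sup>*" using reach \<open>u \<in> W\<close> by blast
    then have "(u,a0) \<in> ((RR X Y G W)\<inverse>)\<^sup>*" by (simp add: rtrancl_converse)
    then have "(u,a0) \<in> (RR X Y G W)\<^sup>*" using symW by simp
    then show "(u,v) \<in> (RR X Y G W)\<^sup>*" using reach \<open>v \<in> W\<close> by (meson rtrancl_trans)
  qed
  obtain X2 Y2 where F: "(X2,Y2) \<in> FG X Y G"
    and c: "card ((\<lambda>v. nbr X Y G v \<inter> W) ` W) \<le> card (X2 <+> Y2)"
    using reduce[OF WU finW connW] by blast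
  have inj: "inj_on (\<lambda>v. N v \<inter> W) A"
  proof (rule inj_onI, rule ccontr)
    fix u v assume u: "u \<in> A" and v: "v \<in> A" and eq: "N u \<inter> W = N v \<inter> W" and ne: "u \<noteq> v"
    then have p: "(u,v) \<in> Prs" unfolding Prs_def by auto
    then have dW: "dd (u,v) \<in> W" using DW unfolding D_def by auto
    have h: "(dd (u,v) \<in> N u \<and> dd (u,v) \<notin> N v) \<or> (dd (u,v) \<in> N v \<and> dd (u,v) \<notin> N u)"
      using bspec[OF dd p] by simp
    then show False using eq dW by blast
  qed
  have "card A = card ((\<lambda>v. N v \<inter> W) ` A)" using card_image[OF inj] by simp
  also have "\<dots> \<le> card ((\<lambda>v. N v \<inter> W) ` W)"
    using DW finW unfolding D_def by (intro card_mono) auto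
  also have "\<dots> \<le> M" using c bound[OF F] unfolding N_def by simp
  finally show False using A(3) by simp
qed

end
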